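(* For every instance of (weighted) Maximum Coverage with covering multiplicity $r$, the greedy algorithm (with arbitrary tie-breaking) outputs $k$ sets whose union has weight at least $\left(1-(1-1/r)^r\right)$ times the optimum weight.
   Context: An instance of weighted Maximum Coverage is $({U},\mathcal{R},k)$ with ${U}$ finite, $\mathcal{R}$ a collection of subsets of ${U}$, $k$ a positive integer, and weights $w:{U}\to\mathbb{R}_{\ge0}$, with $w(S)=\sum_{x\in S}w(x)$; the goal is to choose $k$ sets of $\mathcal{R}$ maximizing the weight of their union (the unweighted problem is the case $w\equiv1$). The greedy algorithm chooses $k$ sets sequentially, each new set maximizing the weight of the elements it covers that are not covered by previously chosen sets. The instance has covering multiplicity $r$ if for every $k$-tuple of sets $a_1,\dots,a_k\in\mathcal{R}$ there exists an optimal solution $(o_1,\dots,o_k)$, with union denoted $OPT$, such that each set $a_i\cap OPT$ ($1\le i\le k$) is contained in the union of some $r$ elements of $\{o_1,\dots,o_k\}$. *)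

theory Defs
  imports Complex_Main
begin

text \<open>Weighted Maximum Coverage instance (U, R, k) with weights w.
  A choice of k sets is a function from indices i < k into R (repetitions allowed).\<close>

definition wt :: "('a \<Rightarrow> real) \<Rightarrow> 'a set \<Rightarrow> real" where
  "wt w S = (\<Sum>x\<in>S. w x)"

definition mc_instance :: "'a set \<Rightarrow> 'a set set \<Rightarrow> nat \<Rightarrow> ('a \<Rightarrow> real) \<Rightarrow> bool" where
  "mc_instance U R k w \<longleftrightarrow> finite U \<and> (\<forall>S\<in>R. S \<subseteq> U) \<and> 0 < k \<and> (\<forall>x\<in>U. 0 \<le> w x)"

definition is_choice :: "'a set set \<Rightarrow> nat \<Rightarrow> (nat \<Rightarrow> 'a set) \<Rightarrow> bool" where
  "is_choice R k a \<longleftrightarrow> (\<forall>i<k. a i \<in> R)"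

definition union_of :: "nat \<Rightarrow> (nat \<Rightarrow> 'a set) \<Rightarrow> 'a set" where
  "union_of k a = (\<Union>i<k. a i)"

definition is_optimal :: "'a set set \<Rightarrow> nat \<Rightarrow> ('a \<Rightarrow> real) \<Rightarrow> (nat \<Rightarrow> 'a set) \<Rightarrow> bool" where
  "is_optimal R k w opt \<longleftrightarrow> is_choice R k opt \<and>
     (\<forall>a. is_choice R k a \<longrightarrow> wt w (union_of k a) \<le> wt w (union_of k opt))"

definition covering_multiplicity :: "'a set set \<Rightarrow> nat \<Rightarrow> ('a \<Rightarrow> real) \<Rightarrow> nat \<Rightarrow> bool" where
  "covering_multiplicity R k w r \<longleftrightarrow>
     (\<forall>a. is_choice R k a \<longrightarrow>
        (\<exists>opt. is_optimal R k w opt \<and>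
           (\<forall>i<k. \<exists>J. J \<subseteq> {..<k} \<and> card J \<le> r \<and>
                a i \<inter> union_of k opt \<subseteq> (\<Union>j\<in>J. opt j))))"

definition greedy_run :: "'a set set \<Rightarrow> nat \<Rightarrow> ('a \<Rightarrow> real) \<Rightarrow> (nat \<Rightarrow> 'a set) \<Rightarrow> bool" where
  "greedy_run R k w g \<longleftrightarrow> (\<forall>i<k. g i \<in> R \<and>
     (\<forall>S\<in>R. wt w (S - union_of i g) \<le> wt w (g i - union_of i g)))"

end

theory Submission
  imports Defs
begin

definition Lam :: "real \<Rightarrow> real \<Rightarrow> real" where
  "Lam R x = 1 - (1 - 1/R) ^ nat \<lfloor>x\<rfloor> * (1 - (x - of_int \<lfloor>x\<rfloor>) / R)"

definition line :: "real \<Rightarrow> nat \<Rightarrow> real \<Rightarrow> real" where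
  "line R t x = 1 - (1 - 1/R) ^ t + (x - real t) * (1 - 1/R) ^ t / R"

lemma Lam_repr:
  assumes "0 \<le> x"
  shows "x = real (nat \<lfloor>x\<rfloor>) + (x - of_int \<lfloor>x\<rfloor>) \<and> 0 \<le> x - of_int \<lfloor>x\<rfloor> \<and> x - of_int \<lfloor>x\<rfloor> < 1"
  using assms by (auto simp: floor_less_cancel)

lemma Lam_nat: "Lam R (real m) = 1 - (1 - 1/R) ^ m"
  by (simp add: Lam_def)

lemma Lam_zero: "Lam R 0 = 0"
  using Lam_nat[of R 0] by simp

lemma q_facts: fixes R :: real assumes "1 \<le> R" shows "0 \<le> 1 - 1/R" "1 - 1/R \<le> 1" "1 - 1/R < 1"
proof -
  have R: "0 < R" using assms by linarith
  show "0 \<le> 1 - 1/R" using assms by (simp add: field_simps)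
  show "1 - 1/R \<le> 1" using R by simp
  show "1 - 1/R < 1" using R by simp
qed

lemma Lam_nonneg:
  assumes R: "1 \<le> R" and x: "0 \<le> x"
  shows "0 \<le> Lam R x"
proof -
  define th where "th = x - of_int \<lfloor>x\<rfloor>"
  have th: "0 \<le> th" "th < 1" using Lam_repr[OF x] th_def by auto
  have a: "(1 - 1/R) ^ nat \<lfloor>x\<rfloor> \<le> 1" using q_facts[OF R] by (simp add: power_le_one)
  have b: "0 \<le> (1 - 1/R) ^ nat \<lfloor>x\<rfloor>" using q_facts[OF R] by simp
  have c: "0 \<le> 1 - th / R" "1 - th/R \<le> 1" using th R by (auto simp: field_simps)
  have "(1 - 1/R) ^ nat \<lfloor>x\<rfloor> * (1 - th / R) \<le> 1"
    using a b c mult_le_one by blast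
  then show ?thesis unfolding Lam_def th_def by simp
qed

lemma Lam_le_line:
  assumes R: "1 \<le> R" and x: "0 \<le> x" and t: "t \<le> nat \<lfloor>x\<rfloor> + 1"
  shows "Lam R x \<le> line R t x"
proof -
  define n where "n = nat \<lfloor>x\<rfloor>"
  define th where "th = x - of_int \<lfloor>x\<rfloor>"
  define q where "q = 1 - 1/R"
  have xe: "x = real n + th" and th: "0 \<le> th" "th < 1" using Lam_repr[OF x] n_def th_def by auto
  have q0: "0 \<le> q" and q1: "q \<le> 1" using q_facts[OF R] q_def by auto
  have L: "Lam R x = 1 - q ^ n * (1 - th / R)" unfolding Lam_def n_def th_def q_def by simp
  have Ln: "line R t x = 1 - q ^ t + (real n + th - real t) * q ^ t / R"
    unfolding line_def q_def xe by simp
  have Rp: "0 < R" using R by simp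
  show ?thesis
  proof (cases "t \<le> n")
    case True
    define d where "d = n - t"
    have nd: "n = t + d" using True d_def by simp
    have bern: "1 + real d * (- (1/R)) \<le> (1 + (- (1/R))) ^ d"
      by (rule Bernoulli_inequality) (use R in \<open>auto simp: field_simps\<close>)
    have bern': "1 - real d / R \<le> q ^ d" using bern by (simp add: q_def)
    have c: "0 \<le> 1 - th / R" using th R by (auto simp: field_simps)
    have "(1 - real d / R) * (1 - th / R) \<le> q ^ d * (1 - th / R)"
      using mult_right_mono[OF bern' c] .
    moreover have "1 - (real d + th) / R \<le> (1 - real d / R) * (1 - th / R)"
    proof -
      have "0 \<le> real d * th / (R * R)" using th Rp by simp
      then show ?thesis using Rp by (simp add: field_simps)
    qed
    ultimately have key: "1 - (real d + th) / R \<le> q ^ d * (1 - th / R)" by linarith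
    have "q ^ t * (1 - (real d + th) / R) \<le> q ^ t * (q ^ d * (1 - th / R))"
      using mult_left_mono[OF key] q0 by simp
    then have "q ^ t * (1 - (real d + th) / R) \<le> q ^ n * (1 - th / R)"
      by (simp add: nd power_add mult.assoc)
    then show ?thesis unfolding L Ln using nd by (simp add: field_simps)
  next
    case False
    then have tn: "t = n + 1" using t n_def by simp
    have "q * (1 - (th - 1) / R) - (1 - th / R) = - (1 - th) / (R * R)"
      unfolding q_def using Rp by (simp add: field_simps)
    also have "\<dots> \<le> 0" using th Rp by (simp add: divide_nonpos_pos)
    finally have "q * (1 - (th - 1) / R) \<le> (1 - th / R)" by simp
    then have "q ^ n * (q * (1 - (th - 1) / R)) \<le> q ^ n * (1 - th / R)"
      using mult_left_mono[OF _ zero_le_power[OF q0]] by blast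
    then have "q ^ t * (1 - (th - 1) / R) \<le> q ^ n * (1 - th / R)"
      by (simp add: tn algebra_simps)
    then show ?thesis unfolding L Ln using tn by (simp add: field_simps)
  qed
qed

lemma line_at_floor:
  assumes x: "0 \<le> x"
  shows "line R (nat \<lfloor>x\<rfloor>) x = Lam R x"
  using Lam_repr[OF x] unfolding line_def Lam_def by (simp add: field_simps)

lemma Lam_slope:
  assumes R: "1 \<le> R" and y: "0 \<le> y" and yx: "y \<le> x"
  shows "Lam R x - Lam R y \<le> (x - y) / R"
proof -
  have x: "0 \<le> x" using y yx by simp
  have t: "nat \<lfloor>y\<rfloor> \<le> nat \<lfloor>x\<rfloor> + 1" using yx by (simp add: floor_mono nat_mono le_SucI)
  have "Lam R x \<le> line R (nat \<lfloor>y\<rfloor>) x" by (rule Lam_le_line[OF R x t])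
  moreover have "line R (nat \<lfloor>y\<rfloor>) x - line R (nat \<lfloor>y\<rfloor>) y = (x - y) * (1 - 1/R) ^ nat \<lfloor>y\<rfloor> / R"
    unfolding line_def by (simp add: algebra_simps diff_divide_distrib[symmetric])
  moreover have "(x - y) * (1 - 1/R) ^ nat \<lfloor>y\<rfloor> / R \<le> (x - y) / R"
  proof -
    have "(1 - 1/R) ^ nat \<lfloor>y\<rfloor> \<le> 1" using q_facts[OF R] by (simp add: power_le_one)
    then have "(x - y) * (1 - 1/R) ^ nat \<lfloor>y\<rfloor> \<le> (x - y)" using yx
      by (simp add: mult_left_le)
    then show ?thesis using R by (simp add: divide_right_mono)
  qed
  ultimately show ?thesis using line_at_floor[OF y, of R] by linarith
qed

lemma Lam_mono:
  assumes R: "1 \<le> R" and y: "0 \<le> y" and yx: "y \<le> x"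
  shows "Lam R y \<le> Lam R x"
proof -
  have x: "0 \<le> x" using y yx by simp
  define q where "q = 1 - 1/R"
  have q0: "0 \<le> q" and q1: "q \<le> 1" using q_facts[OF R] q_def by auto
  define n where "n = nat \<lfloor>x\<rfloor>"
  define th where "th = x - of_int \<lfloor>x\<rfloor>"
  define m where "m = nat \<lfloor>y\<rfloor>"
  define ph where "ph = y - of_int \<lfloor>y\<rfloor>"
  have xe: "x = real n + th" and th: "0 \<le> th" "th < 1" using Lam_repr[OF x] n_def th_def by auto
  have ye: "y = real m + ph" and ph: "0 \<le> ph" "ph < 1" using Lam_repr[OF y] m_def ph_def by auto
  have Lx: "Lam R x = 1 - q ^ n * (1 - th / R)" unfolding Lam_def n_def th_def q_def by simp
  have Ly: "Lam R y = 1 - q ^ m * (1 - ph / R)" unfolding Lam_def m_def ph_def q_def by simp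
  have mn: "m \<le> n" unfolding m_def n_def using yx by (simp add: floor_mono nat_mono)
  have Rp: "0 < R" using R by simp
  show ?thesis
  proof (cases "m = n")
    case True
    then have "ph \<le> th" using xe ye yx by simp
    then have "1 - th / R \<le> 1 - ph / R" using Rp by (simp add: divide_right_mono)
    then have "q ^ n * (1 - th / R) \<le> q ^ m * (1 - ph / R)" using True q0
      by (simp add: mult_left_mono)
    then show ?thesis unfolding Lx Ly by simp
  next
    case False
    then have "Suc m \<le> n" using mn by simp
    then have p: "q ^ n \<le> q ^ Suc m" using q0 q1 by (rule power_decreasing)
    have c1: "1 - th / R \<le> 1" "0 \<le> 1 - th / R" using th Rp R by (auto simp: field_simps)
    have "q ^ n * (1 - th / R) \<le> q ^ n" using c1 q0 by (simp add: mult_left_le)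
    also have "\<dots> \<le> q ^ m * q" using p by (simp add: mult.commute)
    also have "\<dots> \<le> q ^ m * (1 - ph / R)"
    proof -
      have "ph \<le> 1" using ph by simp
      then have "q \<le> 1 - ph / R" unfolding q_def using Rp by (simp add: divide_right_mono)
      then show ?thesis using q0 by (simp add: mult_left_mono)
    qed
    finally show ?thesis unfolding Lx Ly by simp
  qed
qed

lemma Lam_identity:
  assumes R: "1 \<le> R" and s: "0 \<le> s"
  shows "(1 - 1/R) ^ (nat \<lfloor>s\<rfloor> + 1) + R * (line R (nat \<lfloor>s\<rfloor> + 1) s - Lam R s) + Lam R s = 1"
proof -
  define q where "q = 1 - 1/R"
  define n where "n = nat \<lfloor>s\<rfloor>"
  define th where "th = s - of_int \<lfloor>s\<rfloor>"
  have se: "s = real n + th" using Lam_repr[OF s] n_def th_def by auto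
  have L: "Lam R s = 1 - q ^ n * (1 - th / R)" unfolding Lam_def n_def th_def q_def by simp
  have Ln: "line R (n + 1) s = 1 - q ^ (n+1) + (real n + th - real (n+1)) * q ^ (n+1) / R"
    unfolding line_def q_def se by simp
  have Rp: "R \<noteq> 0" using R by simp
  show ?thesis unfolding n_def[symmetric] q_def[symmetric] L Ln
    using Rp by (simp add: q_def field_simps)
qed

lemma line_shift: "line R t z = line R t y + (z - y) * (1 - 1/R) ^ t / R"
  unfolding line_def by (simp add: add_divide_distrib[symmetric] algebra_simps)

lemma term_bound:
  assumes R: "1 \<le> R" and z: "0 \<le> z" and sg: "0 \<le> sg"
  shows "Lam R z - Lam R (min z sg) \<le> (1 - 1/R) ^ (nat \<lfloor>sg\<rfloor> + 1) / R * max (z - sg) 0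
           + (line R (nat \<lfloor>sg\<rfloor> + 1) sg - Lam R sg)"
proof (cases "z \<le> sg")
  case True
  have a: "Lam R sg \<le> line R (nat \<lfloor>sg\<rfloor> + 1) sg" by (rule Lam_le_line[OF R sg]) simp
  have b: "0 \<le> (1 - 1/R) ^ (nat \<lfloor>sg\<rfloor> + 1) / R" using q_facts[OF R] R by simp
  have "0 \<le> (1 - 1/R) ^ (nat \<lfloor>sg\<rfloor> + 1) / R * max (z - sg) 0"
    using mult_nonneg_nonneg[OF b, of "max (z - sg) 0"] by simp
  then show ?thesis using True a by simp
next
  case False
  have t: "nat \<lfloor>sg\<rfloor> + 1 \<le> nat \<lfloor>z\<rfloor> + 1" using False by (simp add: floor_mono nat_mono)
  have "Lam R z \<le> line R (nat \<lfloor>sg\<rfloor> + 1) z" by (rule Lam_le_line[OF R z t])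
  then show ?thesis using False line_shift[of R "nat \<lfloor>sg\<rfloor> + 1" z sg] by (simp add: mult.commute)
qed

lemma sum_Lam_slope:
  assumes R: "1 \<le> R" and K: "finite K" and h: "\<forall>j\<in>K. 0 \<le> s' j \<and> s' j \<le> s j"
  shows "(\<Sum>j\<in>K. Lam R (s j) - Lam R (s' j)) \<le> (sum s K - sum s' K) / R"
proof -
  have "(\<Sum>j\<in>K. Lam R (s j) - Lam R (s' j)) \<le> (\<Sum>j\<in>K. (s j - s' j) / R)"
    by (rule sum_mono) (use h Lam_slope[OF R] in auto)
  also have "\<dots> = (sum s K - sum s' K) / R"
    by (simp add: sum_divide_distrib[symmetric] sum_subtractf)
  finally show ?thesis .
qed

lemma Lam_mono_sum_nonneg:
  assumes R: "1 \<le> R" and h: "\<forall>j\<in>K. 0 \<le> s' j \<and> s' j \<le> s j"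
  shows "0 \<le> (\<Sum>j\<in>K. Lam R (s j) - Lam R (s' j))"
  by (rule sum_nonneg) (use h Lam_mono[OF R] in auto)

lemma step_exists:
  fixes R :: real and K J :: "nat set" and s :: "nat \<Rightarrow> real"
  assumes R: "1 \<le> R" and K: "finite K" and JK: "J \<subseteq> K" and cJ: "real (card J) \<le> R"
    and s0: "\<forall>j\<in>K. 0 \<le> s j"
  shows "\<exists>s'. (\<forall>j\<in>K. 0 \<le> s' j \<and> s' j \<le> s j) \<and> sum s' K \<le> max (sum s K - R) 0
    \<and> (\<Sum>j\<in>K. Lam R (s j) - Lam R (s' j)) \<le> 1
    \<and> (\<forall>l\<in>J. (\<Sum>j\<in>K. Lam R (s j) - Lam R (s' j)) + Lam R (s' l) \<le> 1)"
proof -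
  have Rp: "0 < R" using R by linarith
  have finJ: "finite J" using K JK finite_subset by blast
  define A where "A = sum s J"
  define B where "B = sum s (K - J)"
  have AB: "sum s K = A + B" unfolding A_def B_def using K JK
    by (metis add.commute sum.subset_diff)
  have A0: "0 \<le> A" unfolding A_def using s0 JK by (intro sum_nonneg) auto
  have B0: "0 \<le> B" unfolding B_def using s0 by (intro sum_nonneg) auto
  show ?thesis
  proof (cases "A \<le> R")
    case True
    show ?thesis
    proof (cases "sum s K \<le> R")
      case True
      define s' where "s' = (\<lambda>j::nat. 0::real)"
      have h: "\<forall>j\<in>K. 0 \<le> s' j \<and> s' j \<le> s j" using s0 s'_def by auto
      have D: "(\<Sum>j\<in>K. Lam R (s j) - Lam R (s' j)) \<le> 1"
      proof -
        have "(\<Sum>j\<in>K. Lam R (s j) - Lam R (s' j)) \<le> (sum s K - sum s' K) / R"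
          by (rule sum_Lam_slope[OF R K h])
        also have "\<dots> \<le> 1" using True Rp by (simp add: s'_def)
        finally show ?thesis .
      qed
      show ?thesis
        by (rule exI[of _ s']) (use h D in \<open>auto simp: s'_def Lam_zero\<close>)
    next
      case False
      have Bp: "R - A < B" using False AB by linarith
      define th where "th = 1 - (R - A) / B"
      have Bpos: "0 < B" using Bp True by linarith
      have th0: "0 \<le> th" unfolding th_def using Bp Bpos by (simp add: field_simps)
      have th1: "th \<le> 1" unfolding th_def using True Bpos by (simp add: field_simps)
      define s' where "s' = (\<lambda>j. if j \<in> J then 0 else th * s j)"
      have h: "\<forall>j\<in>K. 0 \<le> s' j \<and> s' j \<le> s j"
        using s0 th0 th1 unfolding s'_def by (auto simp: mult_le_cancel_right1 mult_left_le_one_le)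
      have ss: "sum s' K = th * B"
      proof -
        have "sum s' K = sum s' J + sum s' (K - J)" using K JK
          by (metis add.commute sum.subset_diff)
        also have "sum s' J = 0" unfolding s'_def by simp
        also have "sum s' (K - J) = th * B" unfolding s'_def B_def
          by (simp add: sum_distrib_left)
        finally show ?thesis by simp
      qed
      have e: "(R - A) / B * B = R - A" using Bpos by simp
      have "th * B = 1 * B - (R - A) / B * B" unfolding th_def by (rule left_diff_distrib)
      then have "th * B = B - (R - A)" by (simp only: e mult_1)
      then have ssv: "sum s' K = sum s K - R" using ss AB by simp
      have D: "(\<Sum>j\<in>K. Lam R (s j) - Lam R (s' j)) \<le> 1"
      proof -
        have "(\<Sum>j\<in>K. Lam R (s j) - Lam R (s' j)) \<le> (sum s K - sum s' K) / R"
          by (rule sum_Lam_slope[OF R K h])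
        also have "\<dots> = 1" using ssv Rp by simp
        finally show ?thesis .
      qed
      show ?thesis
        by (rule exI[of _ s']) (use h D ssv in \<open>auto simp: s'_def Lam_zero\<close>)
    qed
  next
    case False
    define F where "F = (\<lambda>sg. \<Sum>j\<in>J. max (s j - sg) 0)"
    have F0: "F 0 = A" unfolding F_def A_def using s0 JK by (intro sum.cong) auto
    have FA: "F A = 0" unfolding F_def
    proof (intro sum.neutral ballI)
      fix j assume j: "j \<in> J"
      have "s j \<le> A" unfolding A_def using j finJ s0 JK
        by (intro member_le_sum) auto
      then show "max (s j - A) 0 = 0" by simp
    qed
    have contF: "continuous_on {0..A} F" unfolding F_def
      by (intro continuous_intros)
    obtain sg where sgf: "0 \<le> sg" "sg \<le> A" "F sg = R"
      using IVT2'[of F A R 0] F0 FA contF False A0 R by auto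
    define n where "n = nat \<lfloor>sg\<rfloor>"
    define q where "q = 1 - 1/R"
    define s' where "s' = (\<lambda>j. if j \<in> J then min (s j) sg else s j)"
    have h: "\<forall>j\<in>K. 0 \<le> s' j \<and> s' j \<le> s j"
      using s0 sgf unfolding s'_def by auto
    have diff: "sum s K - sum s' K = R"
    proof -
      have "sum s K - sum s' K = (\<Sum>j\<in>K. s j - s' j)" by (simp add: sum_subtractf)
      also have "\<dots> = (\<Sum>j\<in>J. s j - s' j)"
        using K JK by (intro sum.mono_neutral_right) (auto simp: s'_def)
      also have "\<dots> = F sg" unfolding F_def s'_def by (intro sum.cong) auto
      finally show ?thesis using sgf by simp
    qed
    have Dsum: "(\<Sum>j\<in>K. Lam R (s j) - Lam R (s' j)) = (\<Sum>j\<in>J. Lam R (s j) - Lam R (min (s j) sg))"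
    proof -
      have "(\<Sum>j\<in>K. Lam R (s j) - Lam R (s' j)) = (\<Sum>j\<in>J. Lam R (s j) - Lam R (s' j))"
        using K JK by (intro sum.mono_neutral_right) (auto simp: s'_def)
      also have "\<dots> = (\<Sum>j\<in>J. Lam R (s j) - Lam R (min (s j) sg))"
        unfolding s'_def by (intro sum.cong) auto
      finally show ?thesis .
    qed
    define gap where "gap = line R (n + 1) sg - Lam R sg"
    have gap0: "0 \<le> gap" unfolding gap_def n_def by (simp add: Lam_le_line[OF R sgf(1)])
    have Dle: "(\<Sum>j\<in>J. Lam R (s j) - Lam R (min (s j) sg)) \<le> q ^ (n+1) + R * gap"
    proof -
      have "(\<Sum>j\<in>J. Lam R (s j) - Lam R (min (s j) sg))
          \<le> (\<Sum>j\<in>J. q ^ (n+1) / R * max (s j - sg) 0 + gap)"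
        by (rule sum_mono) (use term_bound[OF R _ sgf(1)] s0 JK in \<open>auto simp: q_def n_def gap_def\<close>)
      also have "\<dots> = q ^ (n+1) / R * F sg + real (card J) * gap"
        unfolding F_def by (simp add: sum.distrib sum_distrib_left)
      also have "\<dots> \<le> q ^ (n+1) + R * gap"
        using sgf Rp cJ gap0 by (simp add: mult_right_mono)
      finally show ?thesis .
    qed
    have idt: "q ^ (n+1) + R * gap + Lam R sg = 1"
      using Lam_identity[OF R sgf(1)] unfolding q_def gap_def n_def by simp
    have Ls0: "0 \<le> Lam R sg" by (rule Lam_nonneg[OF R sgf(1)])
    have D: "(\<Sum>j\<in>K. Lam R (s j) - Lam R (s' j)) + Lam R sg \<le> 1"
      using Dsum Dle idt by linarith
    have L: "\<forall>l\<in>J. Lam R (s' l) \<le> Lam R sg"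
    proof
      fix l assume l: "l \<in> J"
      have "0 \<le> s' l" using h l JK by auto
      moreover have "s' l \<le> sg" using l unfolding s'_def by simp
      ultimately show "Lam R (s' l) \<le> Lam R sg" using Lam_mono[OF R] by blast
    qed
    have ssv: "sum s' K \<le> max (sum s K - R) 0" using diff by simp
    show ?thesis
      by (rule exI[of _ s']) (use h D L Ls0 ssv in fastforce)
  qed
qed


lemma game_bound:
  fixes r k :: nat and gam :: "nat \<Rightarrow> real" and u :: "nat \<Rightarrow> nat \<Rightarrow> real" and J :: "nat \<Rightarrow> nat set"
  assumes r: "1 \<le> r"
    and pay: "\<forall>i<k. \<forall>j<k. u i j \<le> gam i"
    and dec: "\<forall>i<k. \<forall>j<k. u (Suc i) j \<le> u i j"
    and fx: "\<forall>i<k. \<forall>j<k. j \<notin> J i \<longrightarrow> u (Suc i) j = u i j"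
    and red: "\<forall>i<k. (\<Sum>j<k. u i j - u (Suc i) j) \<le> gam i"
    and Jk: "\<forall>i<k. J i \<subseteq> {..<k} \<and> card (J i) \<le> r"
  shows "(1 - (1 - 1/real r)^r) * (\<Sum>j<k. u 0 j) \<le> (\<Sum>i<k. gam i)"
proof -
  define R where "R = real r"
  have R: "1 \<le> R" using r R_def by simp
  have claim: "\<forall>i s. i + m = k \<longrightarrow> (\<forall>j<k. 0 \<le> s j) \<longrightarrow> sum s {..<k} \<le> R * real m \<longrightarrow>
      (\<Sum>j<k. Lam R (s j) * u i j) \<le> (\<Sum>l\<in>{i..<k}. gam l)" for m
  proof (induction m)
    case 0
    show ?case
    proof (intro allI impI)
      fix i s assume i: "i + 0 = k" and s0: "\<forall>j<k. 0 \<le> s j" and ss: "sum s {..<k} \<le> R * real 0"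
      have "\<forall>j\<in>{..<k}. s j = 0"
        using sum_nonneg_eq_0_iff[of "{..<k}" s] s0 ss
        by (metis antisym finite_lessThan lessThan_iff mult_zero_right of_nat_0 sum_nonneg)
      then show "(\<Sum>j<k. Lam R (s j) * u i j) \<le> (\<Sum>l\<in>{i..<k}. gam l)"
        using i by (simp add: Lam_zero)
    qed
  next
    case (Suc m)
    show ?case
    proof (intro allI impI)
      fix i s assume i: "i + Suc m = k" and s0: "\<forall>j<k. 0 \<le> s j" and ss: "sum s {..<k} \<le> R * real (Suc m)"
      have ik: "i < k" using i by simp
      have JK: "J i \<subseteq> {..<k}" and cJ: "real (card (J i)) \<le> R" using Jk ik R_def by auto
      obtain s' where h: "\<forall>j\<in>{..<k}. 0 \<le> s' j \<and> s' j \<le> s j"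
        and ss': "sum s' {..<k} \<le> max (sum s {..<k} - R) 0"
        and D1: "(\<Sum>j\<in>{..<k}. Lam R (s j) - Lam R (s' j)) \<le> 1"
        and DJ: "\<forall>l\<in>J i. (\<Sum>j\<in>{..<k}. Lam R (s j) - Lam R (s' j)) + Lam R (s' l) \<le> 1"
        using step_exists[OF R finite_lessThan JK cJ] s0 by blast
      define D where "D = (\<Sum>j\<in>{..<k}. Lam R (s j) - Lam R (s' j))"
      have ss'': "sum s' {..<k} \<le> R * real m"
      proof -
        have "sum s {..<k} - R \<le> R * real m" using ss by (simp add: algebra_simps)
        moreover have "0 \<le> R * real m" using R by simp
        ultimately show ?thesis using ss' by simp
      qed
      have IH: "(\<Sum>j<k. Lam R (s' j) * u (Suc i) j) \<le> (\<Sum>l\<in>{Suc i..<k}. gam l)"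
        using Suc.IH[rule_format, of "Suc i" s'] i h ss'' by auto
      have eq: "(\<Sum>j<k. Lam R (s j) * u i j) = (\<Sum>j<k. Lam R (s' j) * u (Suc i) j
          + Lam R (s' j) * (u i j - u (Suc i) j) + (Lam R (s j) - Lam R (s' j)) * u i j)"
        by (rule sum.cong) (auto simp: algebra_simps)
      have b1: "(Lam R (s j) - Lam R (s' j)) * u i j \<le> (Lam R (s j) - Lam R (s' j)) * gam i" if j: "j < k" for j
      proof -
        have "0 \<le> Lam R (s j) - Lam R (s' j)" using h j Lam_mono[OF R] by auto
        then show ?thesis using pay ik j by (simp add: mult_left_mono)
      qed
      have b2: "Lam R (s' j) * (u i j - u (Suc i) j) \<le> (1 - D) * (u i j - u (Suc i) j)" if j: "j < k" for j
      proof (cases "j \<in> J i")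
        case True
        have "Lam R (s' j) \<le> 1 - D" using DJ True D_def by fastforce
        moreover have "0 \<le> u i j - u (Suc i) j" using dec ik j by auto
        ultimately show ?thesis by (simp add: mult_right_mono)
      next
        case False
        then show ?thesis using fx ik j by simp
      qed
      have D0: "D \<le> 1" using D1 D_def by simp
      have "(\<Sum>j<k. Lam R (s j) * u i j) \<le> (\<Sum>j<k. Lam R (s' j) * u (Suc i) j
          + (1 - D) * (u i j - u (Suc i) j) + (Lam R (s j) - Lam R (s' j)) * gam i)"
        unfolding eq by (rule sum_mono) (use b1 b2 in \<open>auto intro: add_mono\<close>)
      also have "\<dots> = (\<Sum>j<k. Lam R (s' j) * u (Suc i) j) + (1 - D) * (\<Sum>j<k. u i j - u (Suc i) j) + D * gam i"
        by (simp add: sum.distrib sum_distrib_left sum_distrib_right D_def)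
      also have "\<dots> \<le> (\<Sum>j<k. Lam R (s' j) * u (Suc i) j) + (1 - D) * gam i + D * gam i"
        using red ik D0 by (simp add: mult_left_mono)
      also have "\<dots> = (\<Sum>j<k. Lam R (s' j) * u (Suc i) j) + gam i" by (simp add: algebra_simps)
      also have "\<dots> \<le> (\<Sum>l\<in>{Suc i..<k}. gam l) + gam i" using IH by simp
      also have "\<dots> = (\<Sum>l\<in>{i..<k}. gam l)" using ik by (simp add: sum.atLeast_Suc_lessThan)
      finally show "(\<Sum>j<k. Lam R (s j) * u i j) \<le> (\<Sum>l\<in>{i..<k}. gam l)" .
    qed
  qed
  have "(\<Sum>j<k. Lam R ((\<lambda>j. R) j) * u 0 j) \<le> (\<Sum>l\<in>{0..<k}. gam l)"
    using claim[of k, rule_format, of 0 "\<lambda>j. R"] R by simp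
  moreover have "Lam R R = 1 - (1 - 1/real r)^r" using Lam_nat[of R r] R_def by simp
  ultimately show ?thesis by (simp add: sum_distrib_left atLeast0LessThan)
qed


lemma union_of_Suc: "union_of (Suc i) g = union_of i g \<union> g i"
  unfolding union_of_def by (auto simp: lessThan_Suc)

theorem theorem4p1:
  fixes U :: "'a set" and R :: "'a set set" and k r :: nat and w :: "'a \<Rightarrow> real"
    and g opt :: "nat \<Rightarrow> 'a set"
  assumes "mc_instance U R k w"
    and "0 < r"
    and "covering_multiplicity R k w r"
    and "greedy_run R k w g"
    and "is_optimal R k w opt"
  shows "wt w (union_of k g) \<ge> (1 - (1 - 1 / real r) ^ r) * wt w (union_of k opt)"
proof -
  have finU: "finite U" and sub: "\<forall>S\<in>R. S \<subseteq> U" and wnn: "\<forall>x\<in>U. 0 \<le> w x"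
    using assms(1) unfolding mc_instance_def by auto
  have gr: "\<forall>i<k. g i \<in> R \<and> (\<forall>S\<in>R. wt w (S - union_of i g) \<le> wt w (g i - union_of i g))"
    using assms(4) unfolding greedy_run_def by auto
  have gch: "is_choice R k g" using gr unfolding is_choice_def by auto
  obtain ob where obopt: "is_optimal R k w ob"
    and obJ: "\<forall>i<k. \<exists>J. J \<subseteq> {..<k} \<and> card J \<le> r \<and> g i \<inter> union_of k ob \<subseteq> (\<Union>j\<in>J. ob j)"
    using assms(3) gch unfolding covering_multiplicity_def by blast
  obtain JJ where JJ: "\<forall>i<k. JJ i \<subseteq> {..<k} \<and> card (JJ i) \<le> r \<and> g i \<inter> union_of k ob \<subseteq> (\<Union>j\<in>JJ i. ob j)"
    using obJ by metis
  have obch: "is_choice R k ob" using obopt unfolding is_optimal_def by auto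
  have wteq: "wt w (union_of k ob) = wt w (union_of k opt)"
    using obopt assms(5) unfolding is_optimal_def
    by (metis antisym)
  have wt_mono: "wt w A \<le> wt w B" if "A \<subseteq> B" "B \<subseteq> U" for A B
    unfolding wt_def using that finU wnn
    by (intro sum_mono2) (auto intro: finite_subset)
  have gU: "g i \<subseteq> U" if "i < k" for i using gr sub that by auto
  have GU: "union_of i g \<subseteq> U" if "i \<le> k" for i
    using gU that unfolding union_of_def by (meson UN_least less_le_trans lessThan_iff)
  define Opt where "Opt = union_of k ob"
  have OptU: "Opt \<subseteq> U" unfolding Opt_def union_of_def using obch sub unfolding is_choice_def by auto
  have finOpt: "finite Opt" using OptU finU finite_subset by blast
  define G where "G = (\<lambda>i. union_of i g)"
  define lst where "lst = (\<lambda>e. LEAST l. e \<in> g l)"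
  define pi where "pi = (\<lambda>e. if e \<in> G k then (SOME j. j \<in> JJ (lst e) \<and> e \<in> ob j) else (SOME j. j < k \<and> e \<in> ob j))"
  have F1: "pi e < k \<and> e \<in> ob (pi e)" if e: "e \<in> Opt" for e
  proof (cases "e \<in> G k")
    case True
    then obtain l where l: "l < k" "e \<in> g l" unfolding G_def union_of_def by auto
    have le: "lst e \<le> l" unfolding lst_def using l(2) by (rule Least_le)
    have el: "e \<in> g (lst e)" unfolding lst_def using l(2) by (rule LeastI)
    have lk: "lst e < k" using le l by simp
    have ex: "\<exists>j. j \<in> JJ (lst e) \<and> e \<in> ob j" using JJ lk el e unfolding Opt_def by blast
    have "pi e \<in> JJ (lst e) \<and> e \<in> ob (pi e)" unfolding pi_def using True someI_ex[OF ex]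
      by simp
    then show ?thesis using JJ lk by auto
  next
    case False
    have ex: "\<exists>j. j < k \<and> e \<in> ob j" using e unfolding Opt_def union_of_def by auto
    show ?thesis unfolding pi_def using False someI_ex[OF ex] by simp
  qed
  have F2: "pi e \<in> JJ i" if e: "e \<in> Opt" and i: "i < k" and ei: "e \<in> g i" and nG: "e \<notin> G i" for e i
  proof -
    have inG: "e \<in> G k" unfolding G_def union_of_def using i ei by auto
    have lsti: "lst e = i" unfolding lst_def
    proof (rule Least_equality)
      show "e \<in> g i" by (rule ei)
      fix l assume "e \<in> g l"
      then show "i \<le> l" using nG unfolding G_def union_of_def by (cases "l < i") auto
    qed
    have ex: "\<exists>j. j \<in> JJ i \<and> e \<in> ob j" using JJ i ei e unfolding Opt_def by blast
    show ?thesis unfolding pi_def using inG lsti someI_ex[OF ex] by simp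
  qed
  define P where "P = (\<lambda>j. {e \<in> Opt. pi e = j})"
  define u where "u = (\<lambda>i j. wt w (P j - G i))"
  define gam where "gam = (\<lambda>i. wt w (g i - G i))"
  have part: "(\<Sum>j<k. wt w (P j - X)) = wt w (Opt - X)" for X
  proof -
    have "wt w (Opt - X) = (\<Sum>j<k. sum w {e. e \<in> Opt - X \<and> pi e = j})"
      unfolding wt_def using finOpt F1
      by (intro sum.group[symmetric]) auto
    also have "\<dots> = (\<Sum>j<k. wt w (P j - X))"
      unfolding wt_def P_def by (intro sum.cong) (auto intro: arg_cong[where f="sum w"])
    finally show ?thesis by simp
  qed
  have PU: "P j \<subseteq> Opt" for j unfolding P_def by auto
  have pay: "\<forall>i<k. \<forall>j<k. u i j \<le> gam i"
  proof (intro allI impI)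
    fix i j assume i: "i < k" and j: "j < k"
    have "wt w (P j - G i) \<le> wt w (ob j - G i)"
      using F1 obch sub j unfolding P_def is_choice_def by (intro wt_mono) auto
    also have "\<dots> \<le> wt w (g i - G i)" using gr obch i j unfolding is_choice_def G_def by auto
    finally show "u i j \<le> gam i" unfolding u_def gam_def .
  qed
  have dec: "\<forall>i<k. \<forall>j<k. u (Suc i) j \<le> u i j"
  proof (intro allI impI)
    fix i j assume i: "i < k" and j: "j < k"
    show "u (Suc i) j \<le> u i j" unfolding u_def G_def union_of_Suc
      using PU OptU by (intro wt_mono) auto
  qed
  have fx: "\<forall>i<k. \<forall>j<k. j \<notin> JJ i \<longrightarrow> u (Suc i) j = u i j"
  proof (intro allI impI)
    fix i j assume i: "i < k" and j: "j < k" and nj: "j \<notin> JJ i"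
    have "P j - G (Suc i) = P j - G i"
    proof
      show "P j - G (Suc i) \<subseteq> P j - G i" unfolding G_def union_of_Suc by auto
      show "P j - G i \<subseteq> P j - G (Suc i)"
      proof
        fix e assume e: "e \<in> P j - G i"
        have "e \<notin> g i"
        proof
          assume "e \<in> g i"
          then have "pi e \<in> JJ i" using F2[of e i] e i unfolding P_def by auto
          then show False using nj e unfolding P_def by auto
        qed
        then show "e \<in> P j - G (Suc i)" using e unfolding G_def union_of_Suc by auto
      qed
    qed
    then show "u (Suc i) j = u i j" unfolding u_def by simp
  qed
  have red: "\<forall>i<k. (\<Sum>j<k. u i j - u (Suc i) j) \<le> gam i"
  proof (intro allI impI)
    fix i assume i: "i < k"
    have "(\<Sum>j<k. u i j - u (Suc i) j) = wt w (Opt - G i) - wt w (Opt - G (Suc i))"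
      unfolding u_def by (simp add: sum_subtractf part)
    also have "\<dots> \<le> wt w (g i - G i)"
    proof -
      have sp: "Opt - G i = (Opt - G (Suc i)) \<union> ((Opt - G i) \<inter> g i)" unfolding G_def union_of_Suc by auto
      have fin1: "finite (Opt - G (Suc i))" using finOpt by simp
      have fin2: "finite ((Opt - G i) \<inter> g i)" using finOpt by simp
      have "wt w (Opt - G i) = wt w ((Opt - G (Suc i)) \<union> ((Opt - G i) \<inter> g i))"
        by (rule arg_cong[OF sp])
      also have "\<dots> = wt w (Opt - G (Suc i)) + wt w ((Opt - G i) \<inter> g i)"
        unfolding wt_def
        by (rule sum.union_disjoint[OF fin1 fin2]) (auto simp: G_def union_of_Suc)
      finally have "wt w (Opt - G i) = wt w (Opt - G (Suc i)) + wt w ((Opt - G i) \<inter> g i)" .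
      moreover have "wt w ((Opt - G i) \<inter> g i) \<le> wt w (g i - G i)"
        using gU[OF i] by (intro wt_mono) auto
      ultimately show ?thesis by simp
    qed
    finally show "(\<Sum>j<k. u i j - u (Suc i) j) \<le> gam i" unfolding gam_def .
  qed
  have Jk: "\<forall>i<k. JJ i \<subseteq> {..<k} \<and> card (JJ i) \<le> r" using JJ by auto
  have r1: "1 \<le> r" using assms(2) by simp
  have main: "(1 - (1 - 1/real r)^r) * (\<Sum>j<k. u 0 j) \<le> (\<Sum>i<k. gam i)"
    by (rule game_bound[OF r1 pay dec fx red Jk])
  have u0: "(\<Sum>j<k. u 0 j) = wt w Opt"
  proof -
    have "(\<Sum>j<k. u 0 j) = wt w (Opt - G 0)" unfolding u_def by (rule part)
    also have "G 0 = {}" unfolding G_def union_of_def by simp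
    finally show ?thesis by simp
  qed
  have tele: "wt w (G n) = (\<Sum>i<n. gam i)" if "n \<le> k" for n
    using that
  proof (induction n)
    case 0
    then show ?case unfolding G_def union_of_def wt_def by simp
  next
    case (Suc n)
    have nk: "n < k" using Suc.prems by simp
    have f1: "finite (G n)" using GU[of n] nk finU finite_subset unfolding G_def by auto
    have f2: "finite (g n - G n)" using gU[OF nk] finU finite_subset by blast
    have "wt w (G (Suc n)) = wt w (G n \<union> (g n - G n))" unfolding G_def union_of_Suc by (simp add: Un_Diff_cancel)
    also have "\<dots> = wt w (G n) + wt w (g n - G n)" unfolding wt_def
      by (rule sum.union_disjoint[OF f1 f2]) auto
    finally show ?case using Suc.IH nk unfolding gam_def by simp
  qed
  have "(1 - (1 - 1/real r)^r) * wt w (union_of k opt) = (1 - (1 - 1/real r)^r) * (\<Sum>j<k. u 0 j)"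
    using u0 wteq Opt_def by simp
  also have "\<dots> \<le> (\<Sum>i<k. gam i)" by (rule main)
  also have "\<dots> = wt w (union_of k g)" using tele[of k] unfolding G_def by simp
  finally show ?thesis by simp
qed

end
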